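(* Let $(Q,P)$ be a weakly quasi-lattice ordered group and let $\Lambda$ be a $P$-graph with $\mathrm{FA}(\Lambda)\neq\emptyset$. Under the homeomorphism $z\mapsto(z,e,z)$ from $\mathcal{X}(\Lambda)$ onto the unit space of the path groupoid $\mathcal{G}(\Lambda)$, the boundary-path space $\partial\mathcal{X}(\Lambda)$ is identified with a closed invariant subset of the unit space of $\mathcal{G}(\Lambda)$.
   Context: $(Q,P)$ weakly quasi-lattice ordered: $Q$ a discrete group, $P\subseteq Q$ a subsemigroup containing the identity $e$ with $P\cap P^{-1}=\{e\}$, and, with $p\le r$ meaning $pq=r$ for some $q\in P$, any two elements of $P$ with a common upper bound have a least common upper bound. A $P$-graph is a countable small category $\Lambda$ (range/source $r,s$) with a functor $d:\Lambda\to P$ with unique factorisation (if $d(\lambda)=pq$ there are unique $\mu,\nu$ with $\lambda=\mu\nu$, $d(\mu)=p$, $d(\nu)=q$). Write $\Lambda^m=d^{-1}(m)$, $\lambda\Lambda=\{\lambda\mu: s(\lambda)=r(\mu)\}$, $\mu\preceq\lambda$ iff $\lambda\in\mu\Lambda$. $\mathrm{FA}(\Lambda)$ is the set of $\lambda$ such that for all $\mu\in\lambda\Lambda,\nu\in\Lambda$ there is finite $J\subseteq\Lambda$ with $\mu\Lambda\cap\nu\Lambda=\bigcup_{\kappa\in J}\kappa\Lambda$. A filter is a nonempty hereditary and directed subset of $\Lambda$ (w.r.t. $\preceq$); $\mathcal{F}(\Lambda)$ the filters, $\mathcal{U}(\Lambda)$ the maximal filters. $\mathcal{P}(\Lambda)$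 has the product topology from $\{0,1\}^\Lambda$; subsets have the subspace topology. Path space $\mathcal{X}(\Lambda)=\{x\in\mathcal{F}(\Lambda): x\cap\mathrm{FA}(\Lambda)\neq\emptyset\}$; boundary-path space $\partial\mathcal{X}(\Lambda)$ = closure of $\mathcal{U}(\Lambda)\cap\mathcal{X}(\Lambda)$ in $\mathcal{X}(\Lambda)$. For $x\in\mathcal{X}(\Lambda)$, $m\in P$ with $x\cap\Lambda^m\neq\emptyset$ (write $x\in\mathrm{dom}(m)$), $x(0,m)$ is the unique element of $x\cap\Lambda^m$ and $x\cdot m=\{\mu: x(0,m)\mu\in x\}$. $\mathcal{G}(\Lambda)$ is the set of $(x,q,y)\in\mathcal{X}(\Lambda)\times Q\times\mathcal{X}(\Lambda)$ with $q=mn^{-1}$, $x\in\mathrm{dom}(m)$, $y\in\mathrm{dom}(n)$, $x\cdot m=y\cdot n$ for some $m,n\in P$; product $(x,q,y)(y,r,z)=(x,qr,z)$, inverse $(y,q^{-1},x)$, so range $r(x,q,y)=(x,e,x)$ and source $s(x,q,y)=(y,e,y)$; topology with basis $\{(x,mn^{-1},y)\in\mathcal{G}(\Lambda): x\in U,y\in V,x\cdot m=y\cdot n\}$, $m,n\in P$, $U,V$ open. A subset $U$ of the unit space is invariant if $r(s^{-1}(U))\subseteq U$. *)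

theory Defs
  imports "HOL-Analysis.Abstract_Topology" "HOL-Algebra.Group"
begin

definition ple :: "('g, 'b) monoid_scheme \<Rightarrow> 'g set \<Rightarrow> 'g \<Rightarrow> 'g \<Rightarrow> bool" where
  "ple Q P p r \<longleftrightarrow> (\<exists>q\<in>P. p \<otimes>\<^bsub>Q\<^esub> q = r)"

definition wqlo :: "('g, 'b) monoid_scheme \<Rightarrow> 'g set \<Rightarrow> bool" where
  "wqlo Q P \<longleftrightarrow> group Q \<and> P \<subseteq> carrier Q \<and> \<one>\<^bsub>Q\<^esub> \<in> P
     \<and> (\<forall>p\<in>P. \<forall>q\<in>P. p \<otimes>\<^bsub>Q\<^esub> q \<in> P)
     \<and> P \<inter> {inv\<^bsub>Q\<^esub> p | p. p \<in> P} = {\<one>\<^bsub>Q\<^esub>}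
     \<and> (\<forall>p\<in>P. \<forall>q\<in>P. (\<exists>u\<in>P. ple Q P p u \<and> ple Q P q u) \<longrightarrow>
          (\<exists>l\<in>P. ple Q P p l \<and> ple Q P q l \<and> (\<forall>u\<in>P. ple Q P p u \<and> ple Q P q u \<longrightarrow> ple Q P l u)))"

text \<open>A small category given by its set of morphisms; objects are identified with
  their identity morphisms.  rg/sr are range/source (returning identity morphisms),
  cp mu nu is the composite mu nu, defined when sr mu = rg nu; dg is the degree functor.\<close>
record ('a, 'g) pgraph =
  Mor :: "'a set"
  rg :: "'a \<Rightarrow> 'a"
  sr :: "'a \<Rightarrow> 'a"
  cp :: "'a \<Rightarrow> 'a \<Rightarrow> 'a"
  dg :: "'a \<Rightarrow> 'g"

definition small_cat :: "('a, 'g) pgraph \<Rightarrow> bool" where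
  "small_cat L \<longleftrightarrow>
     (\<forall>\<mu>\<in>Mor L. rg L \<mu> \<in> Mor L \<and> sr L \<mu> \<in> Mor L
        \<and> rg L (rg L \<mu>) = rg L \<mu> \<and> sr L (rg L \<mu>) = rg L \<mu>
        \<and> rg L (sr L \<mu>) = sr L \<mu> \<and> sr L (sr L \<mu>) = sr L \<mu>
        \<and> cp L (rg L \<mu>) \<mu> = \<mu> \<and> cp L \<mu> (sr L \<mu>) = \<mu>)
   \<and> (\<forall>\<mu>\<in>Mor L. \<forall>\<nu>\<in>Mor L. sr L \<mu> = rg L \<nu> \<longrightarrow>
        cp L \<mu> \<nu> \<in> Mor L \<and> rg L (cp L \<mu> \<nu>) = rg L \<mu> \<and> sr L (cp L \<mu> \<nu>) = sr L \<nu>)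
   \<and> (\<forall>lam\<in>Mor L. \<forall>\<mu>\<in>Mor L. \<forall>\<nu>\<in>Mor L. sr L lam = rg L \<mu> \<longrightarrow> sr L \<mu> = rg L \<nu> \<longrightarrow>
        cp L (cp L lam \<mu>) \<nu> = cp L lam (cp L \<mu> \<nu>))"

definition P_graph :: "('g, 'b) monoid_scheme \<Rightarrow> 'g set \<Rightarrow> ('a, 'g) pgraph \<Rightarrow> bool" where
  "P_graph Q P L \<longleftrightarrow> small_cat L \<and> countable (Mor L)
   \<and> (\<forall>\<mu>\<in>Mor L. dg L \<mu> \<in> P)
   \<and> (\<forall>\<mu>\<in>Mor L. dg L (rg L \<mu>) = \<one>\<^bsub>Q\<^esub>)
   \<and> (\<forall>\<mu>\<in>Mor L. \<forall>\<nu>\<in>Mor L. sr L \<mu> = rg L \<nu> \<longrightarrow> dg L (cp L \<mu> \<nu>) = dg L \<mu> \<otimes>\<^bsub>Q\<^esub> dg L \<nu>)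
   \<and> (\<forall>lam\<in>Mor L. \<forall>p\<in>P. \<forall>q\<in>P. dg L lam = p \<otimes>\<^bsub>Q\<^esub> q \<longrightarrow>
        (\<exists>!(\<mu>, \<nu>). \<mu> \<in> Mor L \<and> \<nu> \<in> Mor L \<and> sr L \<mu> = rg L \<nu> \<and> lam = cp L \<mu> \<nu>
                    \<and> dg L \<mu> = p \<and> dg L \<nu> = q))"

definition ext :: "('a, 'g) pgraph \<Rightarrow> 'a \<Rightarrow> 'a set" where
  "ext L lam = {cp L lam \<mu> | \<mu>. \<mu> \<in> Mor L \<and> sr L lam = rg L \<mu>}"

definition prec :: "('a, 'g) pgraph \<Rightarrow> 'a \<Rightarrow> 'a \<Rightarrow> bool" where
  "prec L \<mu> lam \<longleftrightarrow> lam \<in> ext L \<mu>"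

definition FA :: "('a, 'g) pgraph \<Rightarrow> 'a set" where
  "FA L = {lam \<in> Mor L. \<forall>\<mu>\<in>ext L lam. \<forall>\<nu>\<in>Mor L.
      \<exists>J. finite J \<and> J \<subseteq> Mor L \<and> ext L \<mu> \<inter> ext L \<nu> = (\<Union>\<kappa>\<in>J. ext L \<kappa>)}"

definition is_filter :: "('a, 'g) pgraph \<Rightarrow> 'a set \<Rightarrow> bool" where
  "is_filter L x \<longleftrightarrow> x \<subseteq> Mor L \<and> x \<noteq> {}
     \<and> (\<forall>lam\<in>x. \<forall>\<mu>\<in>Mor L. prec L \<mu> lam \<longrightarrow> \<mu> \<in> x)
     \<and> (\<forall>lam\<in>x. \<forall>\<mu>\<in>x. \<exists>\<nu>\<in>x. prec L lam \<nu> \<and> prec L \<mu> \<nu>)"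

definition Filters :: "('a, 'g) pgraph \<Rightarrow> 'a set set" where
  "Filters L = {x. is_filter L x}"

definition MaxFilters :: "('a, 'g) pgraph \<Rightarrow> 'a set set" where
  "MaxFilters L = {x \<in> Filters L. \<forall>y\<in>Filters L. x \<subseteq> y \<longrightarrow> y = x}"

text \<open>Product topology on P(Lambda) = {0,1}^Lambda, written via its standard subbasis
  of cylinder sets {x. l \<in> x} and {x. l \<notin> x}.\<close>
definition PTop :: "('a, 'g) pgraph \<Rightarrow> 'a set topology" where
  "PTop L = subtopology
     (topology_generated_by (insert UNIV ({{x. l \<in> x} | l. l \<in> Mor L} \<union> {{x. l \<notin> x} | l. l \<in> Mor L})))
     (Pow (Mor L))"

definition XP :: "('a, 'g) pgraph \<Rightarrow> 'a set set" where
  "XP L = {x \<in> Filters L. x \<inter> FA L \<noteq> {}}"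

definition XTop :: "('a, 'g) pgraph \<Rightarrow> 'a set topology" where
  "XTop L = subtopology (PTop L) (XP L)"

definition bdry :: "('a, 'g) pgraph \<Rightarrow> 'a set set" where
  "bdry L = (XTop L) closure_of (MaxFilters L \<inter> XP L)"

definition indom :: "('a, 'g) pgraph \<Rightarrow> 'a set \<Rightarrow> 'g \<Rightarrow> bool" where
  "indom L x m \<longleftrightarrow> (\<exists>lam\<in>x. dg L lam = m)"

definition seg :: "('a, 'g) pgraph \<Rightarrow> 'a set \<Rightarrow> 'g \<Rightarrow> 'a" where
  "seg L x m = (THE lam. lam \<in> x \<and> dg L lam = m)"

definition shift :: "('a, 'g) pgraph \<Rightarrow> 'a set \<Rightarrow> 'g \<Rightarrow> 'a set" where
  "shift L x m = {\<mu> \<in> Mor L. sr L (seg L x m) = rg L \<mu> \<and> cp L (seg L x m) \<mu> \<in> x}"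

definition PG :: "('g, 'b) monoid_scheme \<Rightarrow> 'g set \<Rightarrow> ('a, 'g) pgraph \<Rightarrow> ('a set \<times> 'g \<times> 'a set) set" where
  "PG Q P L = {(x, q, y). x \<in> XP L \<and> y \<in> XP L \<and>
     (\<exists>m\<in>P. \<exists>n\<in>P. q = m \<otimes>\<^bsub>Q\<^esub> inv\<^bsub>Q\<^esub> n \<and> indom L x m \<and> indom L y n \<and> shift L x m = shift L y n)}"

definition GBasic :: "('g, 'b) monoid_scheme \<Rightarrow> 'g set \<Rightarrow> ('a, 'g) pgraph \<Rightarrow> 'g \<Rightarrow> 'g
    \<Rightarrow> 'a set set \<Rightarrow> 'a set set \<Rightarrow> ('a set \<times> 'g \<times> 'a set) set" where
  "GBasic Q P L m n U V = {(x, q, y) \<in> PG Q P L. q = m \<otimes>\<^bsub>Q\<^esub> inv\<^bsub>Q\<^esub> n \<and> x \<in> U \<and> y \<in> V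
      \<and> indom L x m \<and> indom L y n \<and> shift L x m = shift L y n}"

definition GTop :: "('g, 'b) monoid_scheme \<Rightarrow> 'g set \<Rightarrow> ('a, 'g) pgraph \<Rightarrow> ('a set \<times> 'g \<times> 'a set) topology" where
  "GTop Q P L = subtopology
     (topology_generated_by {GBasic Q P L m n U V | m n U V.
        m \<in> P \<and> n \<in> P \<and> openin (XTop L) U \<and> openin (XTop L) V})
     (PG Q P L)"

definition unit_space :: "('g, 'b) monoid_scheme \<Rightarrow> ('a, 'g) pgraph \<Rightarrow> ('a set \<times> 'g \<times> 'a set) set" where
  "unit_space Q L = {(z, \<one>\<^bsub>Q\<^esub>, z) | z. z \<in> XP L}"

definition g_rng :: "('g, 'b) monoid_scheme \<Rightarrow> ('a set \<times> 'g \<times> 'a set) \<Rightarrow> ('a set \<times> 'g \<times> 'a set)" where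
  "g_rng Q g = (case g of (x, q, y) \<Rightarrow> (x, \<one>\<^bsub>Q\<^esub>, x))"

definition g_src :: "('g, 'b) monoid_scheme \<Rightarrow> ('a set \<times> 'g \<times> 'a set) \<Rightarrow> ('a set \<times> 'g \<times> 'a set)" where
  "g_src Q g = (case g of (x, q, y) \<Rightarrow> (y, \<one>\<^bsub>Q\<^esub>, y))"

definition invariant :: "('g, 'b) monoid_scheme \<Rightarrow> ('a set \<times> 'g \<times> 'a set) set
    \<Rightarrow> ('a set \<times> 'g \<times> 'a set) set \<Rightarrow> bool" where
  "invariant Q G U \<longleftrightarrow> g_rng Q ` {g \<in> G. g_src Q g \<in> U} \<subseteq> U"

definition unit_map :: "('g, 'b) monoid_scheme \<Rightarrow> 'a set \<Rightarrow> ('a set \<times> 'g \<times> 'a set)" where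
  "unit_map Q z = (z, \<one>\<^bsub>Q\<^esub>, z)"

end

theory Submission
  imports Defs
begin

definition Phi :: "('a, 'g) pgraph \<Rightarrow> 'a \<Rightarrow> 'a \<Rightarrow> 'a set \<Rightarrow> 'a set" where
  "Phi L \<alpha> \<beta> w = {\<nu> \<in> Mor L. \<exists>\<rho>\<in>Mor L. sr L \<alpha> = rg L \<rho> \<and> cp L \<beta> \<rho> \<in> w \<and> prec L \<nu> (cp L \<alpha> \<rho>)}"


definition SubB :: "('a, 'g) pgraph \<Rightarrow> 'a set set set" where
  "SubB L = insert UNIV ({{x. l \<in> x} | l. l \<in> Mor L} \<union> {{x. l \<notin> x} | l. l \<in> Mor L})"

abbreviation tg :: "('a, 'g) pgraph \<Rightarrow> 'a set topology" where
  "tg L \<equiv> topology_generated_by (SubB L)"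

lemma tg_top: "topspace (tg L) = UNIV"
  unfolding SubB_def by auto

lemma tg_in: "l \<in> Mor L \<Longrightarrow> openin (tg L) {x. l \<in> x}"
  by (rule topology_generated_by_Basis) (auto simp: SubB_def)

lemma tg_notin: "l \<in> Mor L \<Longrightarrow> openin (tg L) {x. l \<notin> x}"
  by (rule topology_generated_by_Basis) (auto simp: SubB_def)

lemma XP_sub: "XP L \<subseteq> Pow (Mor L)"
  unfolding XP_def Filters_def is_filter_def by auto

lemma XTop_eq: "XTop L = subtopology (tg L) (XP L)"
proof -
  have "Pow (Mor L) \<inter> XP L = XP L" using XP_sub by blast
  then show ?thesis unfolding XTop_def PTop_def SubB_def subtopology_subtopology by simp
qed

lemma XTop_top: "topspace (XTop L) = XP L"
  unfolding XTop_eq by (auto simp: SubB_def)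

lemma bdry_XP: "bdry L \<subseteq> XP L"
  unfolding bdry_def using closure_of_subset_topspace XTop_top by metis

lemma XP_filter: "x \<in> XP L \<Longrightarrow> is_filter L x"
  unfolding XP_def Filters_def by blast


lemma XP_open: "openin (XTop L) (XP L)"
  using openin_topspace[of "XTop L"] XTop_top[of L] by simp

lemma PG_in_basic:
  assumes "(x, q, y) \<in> PG Q P L" "x \<in> U" "y \<in> V"
  shows "\<exists>m n. m \<in> P \<and> n \<in> P \<and> (x, q, y) \<in> GBasic Q P L m n U V"
proof -
  obtain m n where "m \<in> P" "n \<in> P" "q = m \<otimes>\<^bsub>Q\<^esub> inv\<^bsub>Q\<^esub> n" "indom L x m" "indom L y n" "shift L x m = shift L y n"
    using assms(1) unfolding PG_def by blast
  then show ?thesis using assms unfolding GBasic_def by blast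
qed

lemma GTop_top: "topspace (GTop Q P L) = PG Q P L"
proof -
  have "PG Q P L \<subseteq> \<Union>{GBasic Q P L m n U V | m n U V.
        m \<in> P \<and> n \<in> P \<and> openin (XTop L) U \<and> openin (XTop L) V}"
  proof
    fix g assume g: "g \<in> PG Q P L"
    obtain x q y where gg: "g = (x, q, y)" by (cases g) auto
    have "x \<in> XP L" "y \<in> XP L" using g unfolding gg PG_def by auto
    then obtain m n where "m \<in> P" "n \<in> P" "g \<in> GBasic Q P L m n (XP L) (XP L)"
      using PG_in_basic[of x q y Q P L "XP L" "XP L"] g gg by blast
    then show "g \<in> \<Union>{GBasic Q P L m n U V | m n U V.
        m \<in> P \<and> n \<in> P \<and> openin (XTop L) U \<and> openin (XTop L) V}" using XP_open by blast
  qed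
  then show ?thesis unfolding GTop_def topspace_subtopology topology_generated_by_topspace by blast
qed

lemma fst_cont: "continuous_map (GTop Q P L) (XTop L) fst"
  unfolding continuous_map
proof (intro conjI allI impI)
  show "fst ` topspace (GTop Q P L) \<subseteq> topspace (XTop L)"
    unfolding GTop_top XTop_top PG_def by auto
  fix U assume U: "openin (XTop L) U"
  define T where "T = \<Union>{GBasic Q P L m n U (XP L) | m n. m \<in> P \<and> n \<in> P}"
  have "openin (topology_generated_by {GBasic Q P L m n U V | m n U V.
        m \<in> P \<and> n \<in> P \<and> openin (XTop L) U \<and> openin (XTop L) V}) T"
    unfolding T_def
    apply (rule openin_Union)
    apply (rule topology_generated_by_Basis)
    using U XP_open by blast
  moreover have "{g \<in> topspace (GTop Q P L). fst g \<in> U} = T \<inter> PG Q P L"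
  proof
    show "{g \<in> topspace (GTop Q P L). fst g \<in> U} \<subseteq> T \<inter> PG Q P L"
    proof
      fix g assume g: "g \<in> {g \<in> topspace (GTop Q P L). fst g \<in> U}"
      obtain x q y where gg: "g = (x, q, y)" by (cases g) auto
      have g1: "(x, q, y) \<in> PG Q P L" "x \<in> U" using g gg GTop_top by auto
      have "y \<in> XP L" using g1 unfolding PG_def by auto
      then show "g \<in> T \<inter> PG Q P L" using PG_in_basic[OF g1(1) g1(2)] g1 gg unfolding T_def by blast
    qed
    show "T \<inter> PG Q P L \<subseteq> {g \<in> topspace (GTop Q P L). fst g \<in> U}"
      unfolding T_def GBasic_def GTop_top by auto
  qed
  ultimately show "openin (GTop Q P L) {g \<in> topspace (GTop Q P L). fst g \<in> U}"
    unfolding GTop_def openin_subtopology by blast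
qed

locale pgl =
  fixes Q :: "('g, 'b) monoid_scheme" and P :: "'g set" and L :: "('a, 'g) pgraph"
  assumes W: "wqlo Q P" and PGr: "P_graph Q P L"
begin

lemma grp: "group Q" and Pc: "P \<subseteq> carrier Q"
  using W unfolding wqlo_def by auto

lemma lcan: "x \<in> carrier Q \<Longrightarrow> y \<in> carrier Q \<Longrightarrow> z \<in> carrier Q \<Longrightarrow> x \<otimes>\<^bsub>Q\<^esub> y = x \<otimes>\<^bsub>Q\<^esub> z \<Longrightarrow> y = z"
  using monoid.Units_l_cancel[OF group.is_monoid[OF grp]] group.Units_eq[OF grp] by blast

lemma sc: "small_cat L" using PGr unfolding P_graph_def by auto

lemma idm:
  assumes "\<mu> \<in> Mor L"
  shows "rg L \<mu> \<in> Mor L" "sr L \<mu> \<in> Mor L" "rg L (rg L \<mu>) = rg L \<mu>" "sr L (rg L \<mu>) = rg L \<mu>"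
    "rg L (sr L \<mu>) = sr L \<mu>" "sr L (sr L \<mu>) = sr L \<mu>" "cp L (rg L \<mu>) \<mu> = \<mu>" "cp L \<mu> (sr L \<mu>) = \<mu>"
proof -
  have "\<forall>\<mu>\<in>Mor L. rg L \<mu> \<in> Mor L \<and> sr L \<mu> \<in> Mor L
        \<and> rg L (rg L \<mu>) = rg L \<mu> \<and> sr L (rg L \<mu>) = rg L \<mu>
        \<and> rg L (sr L \<mu>) = sr L \<mu> \<and> sr L (sr L \<mu>) = sr L \<mu>
        \<and> cp L (rg L \<mu>) \<mu> = \<mu> \<and> cp L \<mu> (sr L \<mu>) = \<mu>"
    using sc unfolding small_cat_def by (elim conjE)
  then show "rg L \<mu> \<in> Mor L" "sr L \<mu> \<in> Mor L" "rg L (rg L \<mu>) = rg L \<mu>" "sr L (rg L \<mu>) = rg L \<mu>"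
    "rg L (sr L \<mu>) = sr L \<mu>" "sr L (sr L \<mu>) = sr L \<mu>" "cp L (rg L \<mu>) \<mu> = \<mu>" "cp L \<mu> (sr L \<mu>) = \<mu>"
    using assms by simp_all
qed

lemma comp:
  assumes "\<mu> \<in> Mor L" "\<nu> \<in> Mor L" "sr L \<mu> = rg L \<nu>"
  shows "cp L \<mu> \<nu> \<in> Mor L" "rg L (cp L \<mu> \<nu>) = rg L \<mu>" "sr L (cp L \<mu> \<nu>) = sr L \<nu>"
proof -
  have "\<forall>\<mu>\<in>Mor L. \<forall>\<nu>\<in>Mor L. sr L \<mu> = rg L \<nu> \<longrightarrow>
        cp L \<mu> \<nu> \<in> Mor L \<and> rg L (cp L \<mu> \<nu>) = rg L \<mu> \<and> sr L (cp L \<mu> \<nu>) = sr L \<nu>"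
    using sc unfolding small_cat_def by (elim conjE)
  then show "cp L \<mu> \<nu> \<in> Mor L" "rg L (cp L \<mu> \<nu>) = rg L \<mu>" "sr L (cp L \<mu> \<nu>) = sr L \<nu>"
    using assms by simp_all
qed

lemma assoc:
  assumes "a \<in> Mor L" "b \<in> Mor L" "c \<in> Mor L" "sr L a = rg L b" "sr L b = rg L c"
  shows "cp L (cp L a b) c = cp L a (cp L b c)"
proof -
  have "\<forall>lam\<in>Mor L. \<forall>\<mu>\<in>Mor L. \<forall>\<nu>\<in>Mor L. sr L lam = rg L \<mu> \<longrightarrow> sr L \<mu> = rg L \<nu> \<longrightarrow>
        cp L (cp L lam \<mu>) \<nu> = cp L lam (cp L \<mu> \<nu>)"
    using sc unfolding small_cat_def by (elim conjE)
  then show ?thesis using assms by simp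
qed

lemma pgparts1: "\<forall>\<mu>\<in>Mor L. dg L \<mu> \<in> P"
  using PGr unfolding P_graph_def by (elim conjE) assumption
lemma pgparts2: "\<forall>\<mu>\<in>Mor L. dg L (rg L \<mu>) = \<one>\<^bsub>Q\<^esub>"
  using PGr unfolding P_graph_def by (elim conjE) assumption
lemma pgparts3: "\<forall>\<mu>\<in>Mor L. \<forall>\<nu>\<in>Mor L. sr L \<mu> = rg L \<nu> \<longrightarrow> dg L (cp L \<mu> \<nu>) = dg L \<mu> \<otimes>\<^bsub>Q\<^esub> dg L \<nu>"
  using PGr unfolding P_graph_def by (elim conjE) assumption
lemma pgparts4: "\<forall>lam\<in>Mor L. \<forall>p\<in>P. \<forall>q\<in>P. dg L lam = p \<otimes>\<^bsub>Q\<^esub> q \<longrightarrow>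
        (\<exists>!(\<mu>, \<nu>). \<mu> \<in> Mor L \<and> \<nu> \<in> Mor L \<and> sr L \<mu> = rg L \<nu> \<and> lam = cp L \<mu> \<nu>
                    \<and> dg L \<mu> = p \<and> dg L \<nu> = q)"
  using PGr unfolding P_graph_def by (elim conjE) assumption

lemma dgP: "\<mu> \<in> Mor L \<Longrightarrow> dg L \<mu> \<in> P"
  using pgparts1 by blast

lemma dgc: "\<mu> \<in> Mor L \<Longrightarrow> dg L \<mu> \<in> carrier Q"
  using dgP Pc by auto

lemma dg_cp: "\<mu> \<in> Mor L \<Longrightarrow> \<nu> \<in> Mor L \<Longrightarrow> sr L \<mu> = rg L \<nu> \<Longrightarrow> dg L (cp L \<mu> \<nu>) = dg L \<mu> \<otimes>\<^bsub>Q\<^esub> dg L \<nu>"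
  using pgparts3 by blast

lemma dg_rg: "\<mu> \<in> Mor L \<Longrightarrow> dg L (rg L \<mu>) = \<one>\<^bsub>Q\<^esub>"
  using pgparts2 by blast

lemma uf:
  assumes "a \<in> Mor L" "b \<in> Mor L" "a' \<in> Mor L" "b' \<in> Mor L" "sr L a = rg L b" "sr L a' = rg L b'"
    "cp L a b = cp L a' b'" "dg L a = dg L a'" "dg L b = dg L b'"
  shows "a = a' \<and> b = b'"
proof -
  let ?l = "cp L a b"
  have l: "?l \<in> Mor L" using comp assms by auto
  have "dg L ?l = dg L a \<otimes>\<^bsub>Q\<^esub> dg L b" using dg_cp assms by auto
  then have "\<exists>!(\<mu>, \<nu>). \<mu> \<in> Mor L \<and> \<nu> \<in> Mor L \<and> sr L \<mu> = rg L \<nu> \<and> ?l = cp L \<mu> \<nu>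
                    \<and> dg L \<mu> = dg L a \<and> dg L \<nu> = dg L b"
    using pgparts4 l dgP assms by blast
  then obtain c where c: "\<forall>y. (case y of (\<mu>, \<nu>) \<Rightarrow> \<mu> \<in> Mor L \<and> \<nu> \<in> Mor L \<and> sr L \<mu> = rg L \<nu> \<and> ?l = cp L \<mu> \<nu>
                    \<and> dg L \<mu> = dg L a \<and> dg L \<nu> = dg L b) \<longrightarrow> y = c"
    unfolding Ex1_def by blast
  have "(a, b) = c" using c[rule_format, of "(a,b)"] assms by simp
  moreover have "(a', b') = c" using c[rule_format, of "(a',b')"] assms by simp
  ultimately show ?thesis by (metis Pair_inject)
qed

lemma cancel:
  assumes "\<alpha> \<in> Mor L" "a \<in> Mor L" "b \<in> Mor L" "sr L \<alpha> = rg L a" "sr L \<alpha> = rg L b"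
    "cp L \<alpha> a = cp L \<alpha> b"
  shows "a = b"
proof -
  have "dg L \<alpha> \<otimes>\<^bsub>Q\<^esub> dg L a = dg L \<alpha> \<otimes>\<^bsub>Q\<^esub> dg L b"
    using dg_cp assms by metis
  then have "dg L a = dg L b" using lcan dgc assms by blast
  then show ?thesis using uf assms by blast
qed

lemma udeg:
  assumes "\<alpha> \<in> Mor L" "\<alpha>' \<in> Mor L" "a \<in> Mor L" "a' \<in> Mor L" "sr L \<alpha> = rg L a" "sr L \<alpha>' = rg L a'"
    "cp L \<alpha> a = cp L \<alpha>' a'" "dg L \<alpha> = dg L \<alpha>'"
  shows "\<alpha> = \<alpha>'"
proof -
  have "dg L \<alpha> \<otimes>\<^bsub>Q\<^esub> dg L a = dg L \<alpha> \<otimes>\<^bsub>Q\<^esub> dg L a'"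
    using dg_cp assms by metis
  then have "dg L a = dg L a'" using lcan dgc assms by blast
  then show ?thesis using uf assms by blast
qed

lemma prec_iff: "prec L \<mu> lam \<longleftrightarrow> (\<exists>\<rho>\<in>Mor L. sr L \<mu> = rg L \<rho> \<and> lam = cp L \<mu> \<rho>)"
  unfolding prec_def ext_def by auto

lemma prec_refl: "lam \<in> Mor L \<Longrightarrow> prec L lam lam"
  unfolding prec_iff using idm by metis

lemma prec_cp: "lam \<in> Mor L \<Longrightarrow> \<rho> \<in> Mor L \<Longrightarrow> sr L lam = rg L \<rho> \<Longrightarrow> prec L lam (cp L lam \<rho>)"
  unfolding prec_iff by auto

lemma prec_Mor: "lam \<in> Mor L \<Longrightarrow> prec L lam \<mu> \<Longrightarrow> \<mu> \<in> Mor L"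
  unfolding prec_iff using comp by auto

lemma prec_trans:
  assumes "lam \<in> Mor L" "prec L lam \<mu>" "prec L \<mu> \<nu>"
  shows "prec L lam \<nu>"
proof -
  obtain a where a: "a \<in> Mor L" "sr L lam = rg L a" "\<mu> = cp L lam a" using assms prec_iff by blast
  obtain b where b: "b \<in> Mor L" "sr L \<mu> = rg L b" "\<nu> = cp L \<mu> b" using assms prec_iff by blast
  have "sr L a = rg L b" using a b comp assms by auto
  then have "\<nu> = cp L lam (cp L a b)" "cp L a b \<in> Mor L" "sr L lam = rg L (cp L a b)"
    using assoc comp a b assms by auto
  then show ?thesis unfolding prec_iff by blast
qed


lemma prec_lmul:
  assumes "\<alpha> \<in> Mor L" "\<rho>1 \<in> Mor L" "sr L \<alpha> = rg L \<rho>1" "prec L \<rho>1 \<rho>"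
  shows "prec L (cp L \<alpha> \<rho>1) (cp L \<alpha> \<rho>)" "sr L \<alpha> = rg L \<rho>" "\<rho> \<in> Mor L"
proof -
  obtain \<sigma> where s: "\<sigma> \<in> Mor L" "sr L \<rho>1 = rg L \<sigma>" "\<rho> = cp L \<rho>1 \<sigma>" using assms prec_iff by blast
  have "cp L \<alpha> \<rho> = cp L (cp L \<alpha> \<rho>1) \<sigma>" using assoc s assms by simp
  moreover have "sr L (cp L \<alpha> \<rho>1) = rg L \<sigma>" using comp s assms by simp
  moreover have "cp L \<alpha> \<rho>1 \<in> Mor L" using comp assms by simp
  ultimately show "prec L (cp L \<alpha> \<rho>1) (cp L \<alpha> \<rho>)" using prec_iff s by auto
  show "sr L \<alpha> = rg L \<rho>" using comp s assms by simp
  show "\<rho> \<in> Mor L" using comp s assms by simp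
qed

lemma prec_lcan:
  assumes "\<beta> \<in> Mor L" "\<rho>1 \<in> Mor L" "\<rho> \<in> Mor L" "sr L \<beta> = rg L \<rho>1" "sr L \<beta> = rg L \<rho>"
    "prec L (cp L \<beta> \<rho>1) (cp L \<beta> \<rho>)"
  shows "prec L \<rho>1 \<rho>"
proof -
  obtain \<sigma> where s: "\<sigma> \<in> Mor L" "sr L (cp L \<beta> \<rho>1) = rg L \<sigma>" "cp L \<beta> \<rho> = cp L (cp L \<beta> \<rho>1) \<sigma>"
    using assms prec_iff by blast
  have s2: "sr L \<rho>1 = rg L \<sigma>" using s comp assms by simp
  then have "cp L \<beta> \<rho> = cp L \<beta> (cp L \<rho>1 \<sigma>)" using assoc s assms by simp
  moreover have "cp L \<rho>1 \<sigma> \<in> Mor L" "sr L \<beta> = rg L (cp L \<rho>1 \<sigma>)" using comp s2 s assms by auto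
  ultimately have "\<rho> = cp L \<rho>1 \<sigma>" using cancel assms by metis
  then show ?thesis using prec_iff s s2 by auto
qed

lemma filt:
  assumes "is_filter L x"
  shows "x \<subseteq> Mor L" "x \<noteq> {}" "\<And>lam \<mu>. lam \<in> x \<Longrightarrow> \<mu> \<in> Mor L \<Longrightarrow> prec L \<mu> lam \<Longrightarrow> \<mu> \<in> x"
    "\<And>lam \<mu>. lam \<in> x \<Longrightarrow> \<mu> \<in> x \<Longrightarrow> \<exists>\<nu>\<in>x. prec L lam \<nu> \<and> prec L \<mu> \<nu>"
  using assms unfolding is_filter_def by blast+

lemma F1:
  assumes "is_filter L x" "\<alpha> \<in> x" "\<nu> \<in> x"
  shows "\<exists>\<rho>\<in>Mor L. sr L \<alpha> = rg L \<rho> \<and> cp L \<alpha> \<rho> \<in> x \<and> prec L \<nu> (cp L \<alpha> \<rho>)"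
proof -
  obtain \<tau> where t: "\<tau> \<in> x" "prec L \<alpha> \<tau>" "prec L \<nu> \<tau>" using filt(4)[OF assms(1)] assms by blast
  then obtain \<rho> where "\<rho>\<in>Mor L" "sr L \<alpha> = rg L \<rho>" "\<tau> = cp L \<alpha> \<rho>" using prec_iff by blast
  then show ?thesis using t by blast
qed

lemma Phi_self:
  assumes "is_filter L x" "\<alpha> \<in> x"
  shows "Phi L \<alpha> \<alpha> x = x"
proof
  show "Phi L \<alpha> \<alpha> x \<subseteq> x"
  proof
    fix \<nu> assume "\<nu> \<in> Phi L \<alpha> \<alpha> x"
    then obtain \<rho> where "\<nu> \<in> Mor L" "cp L \<alpha> \<rho> \<in> x" "prec L \<nu> (cp L \<alpha> \<rho>)" unfolding Phi_def by blast
    then show "\<nu> \<in> x" using filt(3)[OF assms(1)] by blast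
  qed
  show "x \<subseteq> Phi L \<alpha> \<alpha> x"
    using F1[OF assms] filt(1)[OF assms(1)] unfolding Phi_def by blast
qed

lemma Phi_filter:
  assumes "\<alpha> \<in> Mor L" "\<beta> \<in> Mor L" "sr L \<alpha> = sr L \<beta>" "is_filter L w" "\<beta> \<in> w"
  shows "is_filter L (Phi L \<alpha> \<beta> w)" "\<alpha> \<in> Phi L \<alpha> \<beta> w"
proof -
  have s1: "sr L \<alpha> \<in> Mor L" using idm(2) assms(1) .
  have s2: "sr L \<alpha> = rg L (sr L \<alpha>)" using idm(5) assms(1) by simp
  have s3: "cp L \<beta> (sr L \<alpha>) = \<beta>" using idm(8) assms(2,3) by simp
  have s4: "cp L \<alpha> (sr L \<alpha>) = \<alpha>" using idm(8) assms(1) by simp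
  have "\<exists>\<rho>\<in>Mor L. sr L \<alpha> = rg L \<rho> \<and> cp L \<beta> \<rho> \<in> w \<and> prec L \<alpha> (cp L \<alpha> \<rho>)"
    apply (rule bexI[of _ "sr L \<alpha>"]) using s1 s2 s3 s4 assms prec_refl by simp_all
  then show a: "\<alpha> \<in> Phi L \<alpha> \<beta> w" unfolding Phi_def using assms(1) by blast
  have her: "\<mu> \<in> Phi L \<alpha> \<beta> w" if hh: "lam \<in> Phi L \<alpha> \<beta> w" "\<mu> \<in> Mor L" "prec L \<mu> lam" for lam \<mu>
  proof -
    obtain \<rho> where "\<rho>\<in>Mor L" "sr L \<alpha> = rg L \<rho>" "cp L \<beta> \<rho> \<in> w" "prec L lam (cp L \<alpha> \<rho>)" "lam \<in> Mor L"
      using hh(1) unfolding Phi_def by blast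
    then show ?thesis using hh prec_trans[of \<mu> lam "cp L \<alpha> \<rho>"] unfolding Phi_def by blast
  qed
  have dir: "\<exists>\<nu>\<in>Phi L \<alpha> \<beta> w. prec L \<nu>1 \<nu> \<and> prec L \<nu>2 \<nu>"
    if hh: "\<nu>1 \<in> Phi L \<alpha> \<beta> w" "\<nu>2 \<in> Phi L \<alpha> \<beta> w" for \<nu>1 \<nu>2
  proof -
    obtain \<rho>1 where r1: "\<nu>1 \<in> Mor L" "\<rho>1 \<in> Mor L" "sr L \<alpha> = rg L \<rho>1" "cp L \<beta> \<rho>1 \<in> w" "prec L \<nu>1 (cp L \<alpha> \<rho>1)"
      using hh unfolding Phi_def by blast
    obtain \<rho>2 where r2: "\<nu>2 \<in> Mor L" "\<rho>2 \<in> Mor L" "sr L \<alpha> = rg L \<rho>2" "cp L \<beta> \<rho>2 \<in> w" "prec L \<nu>2 (cp L \<alpha> \<rho>2)"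
      using hh unfolding Phi_def by blast
    obtain \<tau> where t: "\<tau> \<in> w" "prec L (cp L \<beta> \<rho>1) \<tau>" "prec L (cp L \<beta> \<rho>2) \<tau>"
      using filt(4)[OF assms(4)] r1 r2 by blast
    have "prec L \<beta> (cp L \<beta> \<rho>1)" using prec_cp r1 assms by simp
    then have "prec L \<beta> \<tau>" using prec_trans t assms by blast
    then obtain \<rho> where r: "\<rho> \<in> Mor L" "sr L \<beta> = rg L \<rho>" "\<tau> = cp L \<beta> \<rho>" using prec_iff by blast
    have p1: "prec L \<rho>1 \<rho>" using prec_lcan[of \<beta> \<rho>1 \<rho>] r r1 t assms by simp
    have p2: "prec L \<rho>2 \<rho>" using prec_lcan[of \<beta> \<rho>2 \<rho>] r r2 t assms by simp
    have q1: "prec L (cp L \<alpha> \<rho>1) (cp L \<alpha> \<rho>)" using prec_lmul[of \<alpha> \<rho>1 \<rho>] p1 r1 assms by simp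
    have q2: "prec L (cp L \<alpha> \<rho>2) (cp L \<alpha> \<rho>)" using prec_lmul[of \<alpha> \<rho>2 \<rho>] p2 r2 assms by simp
    have am: "cp L \<alpha> \<rho> \<in> Mor L" using comp r assms by simp
    have "cp L \<alpha> \<rho> \<in> Phi L \<alpha> \<beta> w" unfolding Phi_def using am r t prec_refl assms by auto
    moreover have "prec L \<nu>1 (cp L \<alpha> \<rho>)" using prec_trans r1 q1 by blast
    moreover have "prec L \<nu>2 (cp L \<alpha> \<rho>)" using prec_trans r2 q2 by blast
    ultimately show ?thesis by blast
  qed
  have sub: "Phi L \<alpha> \<beta> w \<subseteq> Mor L" unfolding Phi_def by blast
  show "is_filter L (Phi L \<alpha> \<beta> w)" unfolding is_filter_def
    using a her dir sub by blast
qed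

lemma Phi_max:
  assumes "\<alpha> \<in> Mor L" "\<beta> \<in> Mor L" "sr L \<alpha> = sr L \<beta>" "w \<in> MaxFilters L" "\<beta> \<in> w"
  shows "Phi L \<alpha> \<beta> w \<in> MaxFilters L"
proof -
  have wf: "is_filter L w" using assms unfolding MaxFilters_def Filters_def by blast
  have wm: "\<And>y. is_filter L y \<Longrightarrow> w \<subseteq> y \<Longrightarrow> y = w" using assms unfolding MaxFilters_def Filters_def by blast
  have pf: "is_filter L (Phi L \<alpha> \<beta> w)" and pa: "\<alpha> \<in> Phi L \<alpha> \<beta> w" using Phi_filter assms wf by blast+
  have "z = Phi L \<alpha> \<beta> w" if z: "is_filter L z" "Phi L \<alpha> \<beta> w \<subseteq> z" for z
  proof -
    have az: "\<alpha> \<in> z" using pa z by blast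
    have psi: "is_filter L (Phi L \<beta> \<alpha> z)" using Phi_filter[of \<beta> \<alpha> z] assms az z by simp
    have "w \<subseteq> Phi L \<beta> \<alpha> z"
    proof
      fix \<nu> assume "\<nu> \<in> w"
      then obtain \<rho> where r: "\<rho> \<in> Mor L" "sr L \<beta> = rg L \<rho>" "cp L \<beta> \<rho> \<in> w" "prec L \<nu> (cp L \<beta> \<rho>)"
        using F1[OF wf assms(5)] by blast
      have "cp L \<alpha> \<rho> \<in> Mor L" using comp r assms by simp
      then have "cp L \<alpha> \<rho> \<in> Phi L \<alpha> \<beta> w" unfolding Phi_def using r prec_refl assms by auto
      then have "cp L \<alpha> \<rho> \<in> z" using z by blast
      moreover have "\<nu> \<in> Mor L" using \<open>\<nu> \<in> w\<close> filt(1)[OF wf] by blast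
      ultimately show "\<nu> \<in> Phi L \<beta> \<alpha> z" unfolding Phi_def using r assms by auto
    qed
    then have wq: "Phi L \<beta> \<alpha> z = w" using wm psi by blast
    have "z \<subseteq> Phi L \<alpha> \<beta> w"
    proof
      fix \<nu> assume "\<nu> \<in> z"
      then obtain \<rho> where r: "\<rho> \<in> Mor L" "sr L \<alpha> = rg L \<rho>" "cp L \<alpha> \<rho> \<in> z" "prec L \<nu> (cp L \<alpha> \<rho>)"
        using F1[OF z(1) az] by blast
      have "cp L \<beta> \<rho> \<in> Mor L" using comp r assms by simp
      then have "cp L \<beta> \<rho> \<in> w" using wq unfolding Phi_def using r prec_refl assms by auto
      moreover have "\<nu> \<in> Mor L" using \<open>\<nu> \<in> z\<close> filt(1)[OF z(1)] by blast
      ultimately show "\<nu> \<in> Phi L \<alpha> \<beta> w" unfolding Phi_def using r assms by auto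
    qed
    then show ?thesis using z by blast
  qed
  then show ?thesis using pf unfolding MaxFilters_def Filters_def by auto
qed

lemma Phi_notin:
  assumes "\<alpha> \<in> Mor L" "\<beta> \<in> Mor L" "\<gamma> \<in> Mor L" "sr L \<alpha> = sr L \<beta>" "is_filter L w"
    "J \<subseteq> Mor L" "ext L \<alpha> \<inter> ext L \<gamma> = (\<Union>\<kappa>\<in>J. ext L \<kappa>)"
  shows "\<gamma> \<notin> Phi L \<alpha> \<beta> w \<longleftrightarrow>
     (\<forall>\<kappa>\<in>J. \<forall>\<rho>\<in>Mor L. sr L \<alpha> = rg L \<rho> \<and> \<kappa> = cp L \<alpha> \<rho> \<longrightarrow> cp L \<beta> \<rho> \<notin> w)"
proof
  assume g: "\<gamma> \<notin> Phi L \<alpha> \<beta> w"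
  show "\<forall>\<kappa>\<in>J. \<forall>\<rho>\<in>Mor L. sr L \<alpha> = rg L \<rho> \<and> \<kappa> = cp L \<alpha> \<rho> \<longrightarrow> cp L \<beta> \<rho> \<notin> w"
  proof (intro ballI impI)
    fix \<kappa> \<rho> assume k: "\<kappa> \<in> J" "\<rho> \<in> Mor L" "sr L \<alpha> = rg L \<rho> \<and> \<kappa> = cp L \<alpha> \<rho>"
    have "\<kappa> \<in> ext L \<kappa>" using prec_refl k assms unfolding prec_def by blast
    then have "prec L \<gamma> \<kappa>" using k assms unfolding prec_def by blast
    then show "cp L \<beta> \<rho> \<notin> w" using g k assms prec_refl unfolding Phi_def by blast
  qed
next
  assume R: "\<forall>\<kappa>\<in>J. \<forall>\<rho>\<in>Mor L. sr L \<alpha> = rg L \<rho> \<and> \<kappa> = cp L \<alpha> \<rho> \<longrightarrow> cp L \<beta> \<rho> \<notin> w"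
  show "\<gamma> \<notin> Phi L \<alpha> \<beta> w"
  proof
    assume "\<gamma> \<in> Phi L \<alpha> \<beta> w"
    then obtain \<rho> where r: "\<rho> \<in> Mor L" "sr L \<alpha> = rg L \<rho>" "cp L \<beta> \<rho> \<in> w" "prec L \<gamma> (cp L \<alpha> \<rho>)"
      unfolding Phi_def by blast
    have "cp L \<alpha> \<rho> \<in> ext L \<alpha>" using prec_cp r assms unfolding prec_def by blast
    then have "cp L \<alpha> \<rho> \<in> ext L \<alpha> \<inter> ext L \<gamma>" using r unfolding prec_def by blast
    then obtain \<kappa> where k: "\<kappa> \<in> J" "prec L \<kappa> (cp L \<alpha> \<rho>)" using assms(7) unfolding prec_def by blast
    have "\<kappa> \<in> ext L \<kappa>" using prec_refl k assms unfolding prec_def by blast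
    then have "\<kappa> \<in> ext L \<alpha>" using k assms(7) by blast
    then obtain \<rho>' where r': "\<rho>' \<in> Mor L" "sr L \<alpha> = rg L \<rho>'" "\<kappa> = cp L \<alpha> \<rho>'"
      using prec_iff unfolding prec_def by blast
    have "prec L \<rho>' \<rho>" using prec_lcan[of \<alpha> \<rho>' \<rho>] r r' k assms by simp
    then have "prec L (cp L \<beta> \<rho>') (cp L \<beta> \<rho>)" using prec_lmul[of \<beta> \<rho>' \<rho>] r' assms by simp
    moreover have "cp L \<beta> \<rho>' \<in> Mor L" using comp r' assms by simp
    ultimately have "cp L \<beta> \<rho>' \<in> w" using filt(3)[OF assms(5)] r by blast
    then show False using R k r' by blast
  qed
qed

lemma A_open:
  assumes "\<alpha> \<in> Mor L" "\<beta> \<in> Mor L" "sr L \<alpha> = sr L \<beta>"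
  shows "openin (tg L) {w. \<forall>\<rho>\<in>Mor L. sr L \<alpha> = rg L \<rho> \<and> \<kappa> = cp L \<alpha> \<rho> \<longrightarrow> cp L \<beta> \<rho> \<notin> w}"
proof (cases "\<exists>\<rho>\<in>Mor L. sr L \<alpha> = rg L \<rho> \<and> \<kappa> = cp L \<alpha> \<rho>")
  case True
  then obtain \<rho>0 where r: "\<rho>0 \<in> Mor L" "sr L \<alpha> = rg L \<rho>0" "\<kappa> = cp L \<alpha> \<rho>0" by blast
  have "{w. \<forall>\<rho>\<in>Mor L. sr L \<alpha> = rg L \<rho> \<and> \<kappa> = cp L \<alpha> \<rho> \<longrightarrow> cp L \<beta> \<rho> \<notin> w} = {w. cp L \<beta> \<rho>0 \<notin> w}"
    using r cancel[OF assms(1)] by blast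
  moreover have "cp L \<beta> \<rho>0 \<in> Mor L" using comp r assms by simp
  ultimately show ?thesis using tg_notin by simp
next
  case False
  then have "{w. \<forall>\<rho>\<in>Mor L. sr L \<alpha> = rg L \<rho> \<and> \<kappa> = cp L \<alpha> \<rho> \<longrightarrow> cp L \<beta> \<rho> \<notin> w} = topspace (tg L)"
    using tg_top by blast
  then show ?thesis by (metis openin_topspace)
qed

lemma core:
  assumes ab: "\<alpha> \<in> Mor L" "\<beta> \<in> Mor L" "sr L \<alpha> = sr L \<beta>"
    and z: "\<zeta> \<in> FA L" "prec L \<zeta> \<alpha>"
    and x: "x \<in> XP L" "\<alpha> \<in> x"
    and y: "y \<in> bdry L" "\<beta> \<in> y"
    and eq: "\<forall>\<sigma>\<in>Mor L. sr L \<alpha> = rg L \<sigma> \<longrightarrow> (cp L \<alpha> \<sigma> \<in> x \<longleftrightarrow> cp L \<beta> \<sigma> \<in> y)"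
  shows "x \<in> bdry L"
proof -
  define D where "D = {w \<in> XP L. \<beta> \<in> w}"
  define f where "f = Phi L \<alpha> \<beta>"
  define X where "X = subtopology (XTop L) D"
  have DX: "D \<subseteq> XP L" unfolding D_def by blast
  have Xeq: "X = subtopology (tg L) D" unfolding X_def XTop_eq subtopology_subtopology
    using DX by (simp add: Int_absorb1)
  have topX: "topspace X = D" unfolding Xeq by (auto simp: SubB_def)
  have zM: "\<zeta> \<in> Mor L" using z unfolding FA_def by blast
  have fXP: "f w \<in> XP L" if "w \<in> D" for w
  proof -
    have wf: "is_filter L w" "\<beta> \<in> w" using that XP_filter unfolding D_def by auto
    have "is_filter L (f w)" "\<alpha> \<in> f w" using Phi_filter[OF ab wf] unfolding f_def by auto
    moreover have "\<zeta> \<in> f w" using filt(3)[OF \<open>is_filter L (f w)\<close> \<open>\<alpha> \<in> f w\<close> zM z(2)] .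
    ultimately show ?thesis unfolding XP_def Filters_def using z by blast
  qed
  have cont_tg: "continuous_map X (tg L) f"
  proof (rule continuous_on_generated_topo)
    show "f ` topspace X \<subseteq> \<Union> (SubB L)" unfolding SubB_def by auto
  next
    fix U assume U: "U \<in> SubB L"
    have opX: "openin X (T \<inter> D)" if "openin (tg L) T" for T
      unfolding Xeq openin_subtopology using that by blast
    show "openin X (f -` U \<inter> topspace X)"
    proof -
      consider "U = UNIV" | l where "l \<in> Mor L" "U = {x. l \<in> x}" | l where "l \<in> Mor L" "U = {x. l \<notin> x}"
        using U unfolding SubB_def by blast
      then show ?thesis
      proof cases
        case 1
        then show ?thesis using topX openin_topspace[of X] by simp
      next
        case 2
        define V where "V = \<Union>{{w. cp L \<beta> \<rho> \<in> w} | \<rho>. \<rho> \<in> Mor L \<and> sr L \<alpha> = rg L \<rho> \<and> prec L l (cp L \<alpha> \<rho>)}"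
        have "openin (tg L) V" unfolding V_def
        proof (rule openin_Union)
          fix S assume "S \<in> {{w. cp L \<beta> \<rho> \<in> w} | \<rho>. \<rho> \<in> Mor L \<and> sr L \<alpha> = rg L \<rho> \<and> prec L l (cp L \<alpha> \<rho>)}"
          then obtain \<rho> where "S = {w. cp L \<beta> \<rho> \<in> w}" "\<rho> \<in> Mor L" "sr L \<alpha> = rg L \<rho>" by blast
          moreover then have "cp L \<beta> \<rho> \<in> Mor L" using comp ab by simp
          ultimately show "openin (tg L) S" using tg_in by simp
        qed
        moreover have "f -` U \<inter> topspace X = V \<inter> D"
        proof -
          have "w \<in> f -` U \<longleftrightarrow> w \<in> V" for w
          proof -
            have e1: "w \<in> f -` U \<longleftrightarrow> (\<exists>\<rho>. \<rho> \<in> Mor L \<and> sr L \<alpha> = rg L \<rho> \<and> cp L \<beta> \<rho> \<in> w \<and> prec L l (cp L \<alpha> \<rho>))"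
              unfolding f_def Phi_def 2 using 2(1) by blast
            have e2: "w \<in> V \<longleftrightarrow> (\<exists>\<rho>. \<rho> \<in> Mor L \<and> sr L \<alpha> = rg L \<rho> \<and> cp L \<beta> \<rho> \<in> w \<and> prec L l (cp L \<alpha> \<rho>))"
              unfolding V_def by blast
            show ?thesis using e1 e2 by simp
          qed
          then show ?thesis unfolding topX by blast
        qed
        ultimately show ?thesis using opX by simp
      next
        case 3
        have "\<alpha> \<in> ext L \<zeta>" using z unfolding prec_def by blast
        then obtain J where J: "finite J" "J \<subseteq> Mor L" "ext L \<alpha> \<inter> ext L l = (\<Union>\<kappa>\<in>J. ext L \<kappa>)"
          using z(1) 3(1) unfolding FA_def by blast
        define A where "A = (\<lambda>\<kappa>. {w. \<forall>\<rho>\<in>Mor L. sr L \<alpha> = rg L \<rho> \<and> \<kappa> = cp L \<alpha> \<rho> \<longrightarrow> cp L \<beta> \<rho> \<notin> w})"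
        define V where "V = \<Inter>(insert UNIV (A ` J))"
        have "openin (tg L) V" unfolding V_def
        proof (rule openin_Inter)
          show "finite (insert UNIV (A ` J))" using J by simp
          show "insert UNIV (A ` J) \<noteq> {}" by simp
          fix S assume "S \<in> insert UNIV (A ` J)"
          then consider "S = UNIV" | \<kappa> where "S = A \<kappa>" by blast
          then show "openin (tg L) S"
          proof cases
            case 1
            then show ?thesis using tg_top[of L] openin_topspace[of "tg L"] by simp
          next
            case 2
            then show ?thesis using A_open[OF ab] unfolding A_def by simp
          qed
        qed
        moreover have "f -` U \<inter> topspace X = V \<inter> D"
        proof -
          have "w \<in> f -` U \<longleftrightarrow> w \<in> V" if "w \<in> D" for w
          proof -
            have wf: "is_filter L w" using that XP_filter unfolding D_def by auto
            have e1: "w \<in> f -` U \<longleftrightarrow> l \<notin> Phi L \<alpha> \<beta> w" unfolding f_def 3 by simp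
            have e2: "w \<in> V \<longleftrightarrow> (\<forall>\<kappa>\<in>J. w \<in> A \<kappa>)" unfolding V_def by blast
            show ?thesis unfolding e1 e2 Phi_notin[OF ab(1,2) 3(1) ab(3) wf J(2,3)] unfolding A_def by blast
          qed
          then show ?thesis unfolding topX by blast
        qed
        ultimately show ?thesis using opX by simp
      qed
    qed
  qed
  have cont: "continuous_map X (XTop L) f"
    unfolding continuous_map_in_subtopology XTop_eq[of L]
    using cont_tg fXP topX by (auto simp: Pi_iff)
  have Dopen: "openin (XTop L) D"
  proof -
    have "D = {w. \<beta> \<in> w} \<inter> XP L" unfolding D_def by blast
    moreover have "openin (tg L) {w. \<beta> \<in> w}" by (rule tg_in[OF ab(2)])
    ultimately show ?thesis unfolding XTop_eq openin_subtopology by (intro exI[of _ "{w. \<beta> \<in> w}"]) simp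
  qed
  let ?M = "MaxFilters L \<inter> XP L"
  have "y \<in> XP L" using y(1) bdry_XP by (rule subsetD[rotated])
  then have yD: "y \<in> D" using y(2) unfolding D_def by simp
  have "y \<in> D \<inter> XTop L closure_of ?M" using yD y(1) unfolding bdry_def by (rule IntI)
  then have "y \<in> XTop L closure_of (D \<inter> ?M)" using openin_Int_closure_of_subset[OF Dopen] by (rule subsetD[rotated])
  then have "y \<in> X closure_of (D \<inter> ?M)" unfolding X_def closure_of_subtopology using yD
    by (simp add: Int_assoc)
  then have "f y \<in> f ` (X closure_of (D \<inter> ?M))" by (rule imageI)
  then have "f y \<in> XTop L closure_of (f ` (D \<inter> ?M))"
    using continuous_map_image_closure_subset[OF cont] by (rule subsetD[rotated])
  moreover have "f ` (D \<inter> ?M) \<subseteq> ?M"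
  proof
    fix v assume "v \<in> f ` (D \<inter> ?M)"
    then obtain w where w: "w \<in> D" "w \<in> MaxFilters L" "v = f w" by blast
    have "f w \<in> MaxFilters L" unfolding f_def using Phi_max[OF ab w(2)] w(1) unfolding D_def by blast
    then show "v \<in> ?M" using fXP w by blast
  qed
  ultimately have "f y \<in> bdry L" unfolding bdry_def using closure_of_mono by blast
  moreover have "f y = x"
  proof -
    have "f y = Phi L \<alpha> \<alpha> x" unfolding f_def Phi_def using eq by blast
    then show ?thesis using Phi_self[OF XP_filter[OF x(1)] x(2)] by simp
  qed
  ultimately show ?thesis by simp
qed

lemma prec_rg: "\<rho> \<in> Mor L \<Longrightarrow> prec L (rg L \<rho>) \<rho>"
  unfolding prec_iff using idm by metis


lemma seg_eq:
  assumes "is_filter L x" "lam \<in> x" "dg L lam = m"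
  shows "seg L x m = lam"
  unfolding seg_def
proof (rule the_equality)
  show "lam \<in> x \<and> dg L lam = m" using assms by simp
  fix lam' assume l': "lam' \<in> x \<and> dg L lam' = m"
  obtain \<tau> where t: "\<tau> \<in> x" "prec L lam \<tau>" "prec L lam' \<tau>" using filt(4)[OF assms(1)] assms(2) l' by blast
  obtain a where a: "a \<in> Mor L" "sr L lam = rg L a" "\<tau> = cp L lam a" using t prec_iff by blast
  obtain a' where a': "a' \<in> Mor L" "sr L lam' = rg L a'" "\<tau> = cp L lam' a'" using t prec_iff by blast
  have "lam \<in> Mor L" "lam' \<in> Mor L" using filt(1)[OF assms(1)] assms(2) l' by auto
  then show "lam' = lam" using udeg[of lam' lam a' a] a a' l' assms by simp
qed

lemma unit_PG:
  assumes "z \<in> XP L"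
  shows "(z, \<one>\<^bsub>Q\<^esub>, z) \<in> PG Q P L"
proof -
  have zf: "is_filter L z" using XP_filter assms .
  obtain lam where "lam \<in> z" using filt(2)[OF zf] by blast
  moreover have "lam \<in> Mor L" using filt(1)[OF zf] \<open>lam \<in> z\<close> by blast
  ultimately have "rg L lam \<in> z" "dg L (rg L lam) = \<one>\<^bsub>Q\<^esub>"
    using filt(3)[OF zf] idm(1) prec_rg dg_rg by auto
  then have ind: "indom L z \<one>\<^bsub>Q\<^esub>" unfolding indom_def by blast
  have oneP: "\<one>\<^bsub>Q\<^esub> \<in> P" using W unfolding wqlo_def by blast
  have "\<one>\<^bsub>Q\<^esub> = \<one>\<^bsub>Q\<^esub> \<otimes>\<^bsub>Q\<^esub> inv\<^bsub>Q\<^esub> \<one>\<^bsub>Q\<^esub>"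
    using monoid.inv_one[OF group.is_monoid[OF grp]] monoid.r_one[OF group.is_monoid[OF grp]] monoid.one_closed[OF group.is_monoid[OF grp]] by simp
  then show ?thesis unfolding PG_def using assms ind oneP by blast
qed

lemma inv_step:
  assumes g: "(x, q, y) \<in> PG Q P L" and y: "y \<in> bdry L"
  shows "x \<in> bdry L"
proof -
  obtain m n where mn: "x \<in> XP L" "y \<in> XP L" "m \<in> P" "n \<in> P" "indom L x m" "indom L y n" "shift L x m = shift L y n"
    using g unfolding PG_def by blast
  have xf: "is_filter L x" and yf: "is_filter L y" using XP_filter mn by auto
  obtain \<alpha>0 where a0: "\<alpha>0 \<in> x" "dg L \<alpha>0 = m" using mn unfolding indom_def by blast
  obtain \<beta>0 where b0: "\<beta>0 \<in> y" "dg L \<beta>0 = n" using mn unfolding indom_def by blast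
  have sa: "seg L x m = \<alpha>0" using seg_eq xf a0 by blast
  have sb: "seg L y n = \<beta>0" using seg_eq yf b0 by blast
  have Sx: "\<And>\<mu>. \<mu> \<in> shift L x m \<longleftrightarrow> \<mu> \<in> Mor L \<and> sr L \<alpha>0 = rg L \<mu> \<and> cp L \<alpha>0 \<mu> \<in> x"
    unfolding shift_def sa by blast
  have Sy: "\<And>\<mu>. \<mu> \<in> shift L y n \<longleftrightarrow> \<mu> \<in> Mor L \<and> sr L \<beta>0 = rg L \<mu> \<and> cp L \<beta>0 \<mu> \<in> y"
    unfolding shift_def sb by blast
  have a0M: "\<alpha>0 \<in> Mor L" and b0M: "\<beta>0 \<in> Mor L" using filt(1) xf yf a0 b0 by auto
  obtain \<zeta> where z: "\<zeta> \<in> x" "\<zeta> \<in> FA L" using mn unfolding XP_def by blast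
  obtain \<rho>0 where r0: "\<rho>0 \<in> Mor L" "sr L \<alpha>0 = rg L \<rho>0" "cp L \<alpha>0 \<rho>0 \<in> x" "prec L \<zeta> (cp L \<alpha>0 \<rho>0)"
    using F1[OF xf a0(1) z(1)] by blast
  have "\<rho>0 \<in> shift L y n" using Sx r0 mn(7) by blast
  then have r0y: "sr L \<beta>0 = rg L \<rho>0" "cp L \<beta>0 \<rho>0 \<in> y" using Sy by auto
  define \<alpha> where "\<alpha> = cp L \<alpha>0 \<rho>0"
  define \<beta> where "\<beta> = cp L \<beta>0 \<rho>0"
  have ab: "\<alpha> \<in> Mor L" "\<beta> \<in> Mor L" "sr L \<alpha> = sr L \<beta>" "sr L \<alpha> = sr L \<rho>0"
    unfolding \<alpha>_def \<beta>_def using comp a0M b0M r0 r0y by auto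
  have eq: "\<forall>\<sigma>\<in>Mor L. sr L \<alpha> = rg L \<sigma> \<longrightarrow> (cp L \<alpha> \<sigma> \<in> x \<longleftrightarrow> cp L \<beta> \<sigma> \<in> y)"
  proof (intro ballI impI)
    fix \<sigma> assume s: "\<sigma> \<in> Mor L" "sr L \<alpha> = rg L \<sigma>"
    have s2: "sr L \<rho>0 = rg L \<sigma>" using s ab by simp
    have c1: "cp L \<alpha> \<sigma> = cp L \<alpha>0 (cp L \<rho>0 \<sigma>)" unfolding \<alpha>_def using assoc a0M r0 s s2 by simp
    have c2: "cp L \<beta> \<sigma> = cp L \<beta>0 (cp L \<rho>0 \<sigma>)" unfolding \<beta>_def using assoc b0M r0 r0y s s2 by simp
    have rm: "cp L \<rho>0 \<sigma> \<in> Mor L" "rg L (cp L \<rho>0 \<sigma>) = rg L \<rho>0" using comp r0 s s2 by auto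
    have "cp L \<alpha> \<sigma> \<in> x \<longleftrightarrow> cp L \<rho>0 \<sigma> \<in> shift L x m" unfolding Sx c1 using rm r0 by simp
    also have "\<dots> \<longleftrightarrow> cp L \<rho>0 \<sigma> \<in> shift L y n" using mn(7) by simp
    also have "\<dots> \<longleftrightarrow> cp L \<beta> \<sigma> \<in> y" unfolding Sy c2 using rm r0y by simp
    finally show "cp L \<alpha> \<sigma> \<in> x \<longleftrightarrow> cp L \<beta> \<sigma> \<in> y" .
  qed
  show ?thesis
    using core[OF ab(1,2,3) z(2) r0(4)[folded \<alpha>_def] mn(1) r0(3)[folded \<alpha>_def] y r0y(2)[folded \<beta>_def] eq] .
qed

end

theorem lemma5p16:
  fixes Q :: "('g, 'b) monoid_scheme" and P :: "'g set" and L :: "('a, 'g) pgraph"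
  assumes "wqlo Q P"
    and "P_graph Q P L"
    and "FA L \<noteq> {}"
  shows "unit_map Q ` bdry L \<subseteq> unit_space Q L
    \<and> closedin (subtopology (GTop Q P L) (unit_space Q L)) (unit_map Q ` bdry L)
    \<and> invariant Q (PG Q P L) (unit_map Q ` bdry L)"
proof -
  interpret pgl Q P L using assms by unfold_locales
  have a: "unit_map Q ` bdry L \<subseteq> unit_space Q L"
    unfolding unit_map_def unit_space_def using bdry_XP by blast
  have "closedin (XTop L) (bdry L)" unfolding bdry_def by (rule closedin_closure_of)
  then have C: "closedin (GTop Q P L) {g \<in> topspace (GTop Q P L). fst g \<in> bdry L}"
    by (rule closedin_continuous_map_preimage[OF fst_cont])
  have "unit_map Q ` bdry L = {g \<in> topspace (GTop Q P L). fst g \<in> bdry L} \<inter> unit_space Q L"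
  proof
    show "unit_map Q ` bdry L \<subseteq> {g \<in> topspace (GTop Q P L). fst g \<in> bdry L} \<inter> unit_space Q L"
    proof
      fix g assume "g \<in> unit_map Q ` bdry L"
      then obtain z where z: "z \<in> bdry L" "g = (z, \<one>\<^bsub>Q\<^esub>, z)" unfolding unit_map_def by blast
      have "z \<in> XP L" using z bdry_XP by blast
      then show "g \<in> {g \<in> topspace (GTop Q P L). fst g \<in> bdry L} \<inter> unit_space Q L"
      proof -
        have "(z, \<one>\<^bsub>Q\<^esub>, z) \<in> topspace (GTop Q P L)" using unit_PG[OF \<open>z \<in> XP L\<close>] GTop_top[of Q P L] by simp
        moreover have "g \<in> unit_space Q L" unfolding unit_space_def using z(2) \<open>z \<in> XP L\<close> by blast
        ultimately show ?thesis using z by simp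
      qed
    qed
    show "{g \<in> topspace (GTop Q P L). fst g \<in> bdry L} \<inter> unit_space Q L \<subseteq> unit_map Q ` bdry L"
    proof
      fix g assume g: "g \<in> {g \<in> topspace (GTop Q P L). fst g \<in> bdry L} \<inter> unit_space Q L"
      then obtain z where z: "g = (z, \<one>\<^bsub>Q\<^esub>, z)" unfolding unit_space_def by blast
      then have "z \<in> bdry L" using g by simp
      then show "g \<in> unit_map Q ` bdry L" unfolding z unit_map_def by (rule imageI)
    qed
  qed
  then have b: "closedin (subtopology (GTop Q P L) (unit_space Q L)) (unit_map Q ` bdry L)"
    unfolding closedin_subtopology using C by blast
  have c: "invariant Q (PG Q P L) (unit_map Q ` bdry L)"
    unfolding invariant_def
  proof
    fix h assume "h \<in> g_rng Q ` {g \<in> PG Q P L. g_src Q g \<in> unit_map Q ` bdry L}"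
    then obtain g where g: "g \<in> PG Q P L" "g_src Q g \<in> unit_map Q ` bdry L" "h = g_rng Q g" by blast
    obtain x q y where gg: "g = (x, q, y)" by (cases g) auto
    have "y \<in> bdry L" using g(2) unfolding gg g_src_def unit_map_def by auto
    then have "x \<in> bdry L" using inv_step g(1) gg by blast
    then show "h \<in> unit_map Q ` bdry L" unfolding g(3) gg g_rng_def unit_map_def by auto
  qed
  show ?thesis using a b c by blast
qed

end
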